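(* Let $G$ be a group (identity $e$), $H$ an abelian group (written additively), and $f:G\to H$ satisfy $f(xy)+f(xy^{-1})=2f(x)$ for all $x,y\in G$, with $f(e)=0$. If $g\in G$ can be written as a product of involutions (elements $i$ with $i^2=e$), then $2f(g)=0$. In particular, if $G$ is generated by involutions, then $2f(g)=0$ for all $g\in G$. *)

theory Defs
  imports "HOL-Algebra.Algebra"
begin

definition involutions :: "('a, 'b) monoid_scheme \<Rightarrow> 'a set" where
  "involutions G = {i \<in> carrier G. i \<otimes>\<^bsub>G\<^esub> i = \<one>\<^bsub>G\<^esub>}"

definition prod_of_involutions :: "('a, 'b) monoid_scheme \<Rightarrow> 'a \<Rightarrow> bool" where
  "prod_of_involutions G g \<longleftrightarrow>
     (\<exists>is. set is \<subseteq> involutions G \<and> g = foldr (\<lambda>a b. a \<otimes>\<^bsub>G\<^esub> b) is \<one>\<^bsub>G\<^esub>)"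

end

theory Submission
  imports Defs
begin

theorem mainTheorem3:
  fixes G :: "('a, 'c) monoid_scheme" and H :: "('b, 'd) monoid_scheme" and f :: "'a \<Rightarrow> 'b"
  assumes "group G" and "comm_group H"
    and "f \<in> carrier G \<rightarrow> carrier H"
    and "\<forall>x\<in>carrier G. \<forall>y\<in>carrier G.
           f (x \<otimes>\<^bsub>G\<^esub> y) \<otimes>\<^bsub>H\<^esub> f (x \<otimes>\<^bsub>G\<^esub> inv\<^bsub>G\<^esub> y) = f x \<otimes>\<^bsub>H\<^esub> f x"
    and "f \<one>\<^bsub>G\<^esub> = \<one>\<^bsub>H\<^esub>"
  shows "(\<forall>g\<in>carrier G. prod_of_involutions G g \<longrightarrow> f g \<otimes>\<^bsub>H\<^esub> f g = \<one>\<^bsub>H\<^esub>)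
       \<and> (generate G (involutions G) = carrier G \<longrightarrow>
            (\<forall>g\<in>carrier G. f g \<otimes>\<^bsub>H\<^esub> f g = \<one>\<^bsub>H\<^esub>))"
proof -
  interpret G: group G by fact
  interpret H: comm_group H by fact
  have fc: "\<And>x. x \<in> carrier G \<Longrightarrow> f x \<in> carrier H" using assms(3) by auto
  define d where "d x = f x \<otimes>\<^bsub>H\<^esub> f x" for x
  have dc: "\<And>x. x \<in> carrier G \<Longrightarrow> d x \<in> carrier H" using fc d_def by auto
  have A: "f (inv\<^bsub>G\<^esub> y) = inv\<^bsub>H\<^esub> f y" if y: "y \<in> carrier G" for y
  proof -
    have "f (\<one>\<^bsub>G\<^esub> \<otimes>\<^bsub>G\<^esub> y) \<otimes>\<^bsub>H\<^esub> f (\<one>\<^bsub>G\<^esub> \<otimes>\<^bsub>G\<^esub> inv\<^bsub>G\<^esub> y) = f \<one>\<^bsub>G\<^esub> \<otimes>\<^bsub>H\<^esub> f \<one>\<^bsub>G\<^esub>"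
      using assms(4) y by blast
    then have "f (inv\<^bsub>G\<^esub> y) \<otimes>\<^bsub>H\<^esub> f y = \<one>\<^bsub>H\<^esub>"
      using assms(5) y fc by (simp add: H.m_comm)
    then show ?thesis using fc y
      by (simp add: H.inv_equality)
  qed
  have dinv: "d (inv\<^bsub>G\<^esub> y) = inv\<^bsub>H\<^esub> d y" if y: "y \<in> carrier G" for y
    using A[OF y] fc[OF y] by (simp add: d_def H.inv_mult)
  have B: "d (g \<otimes>\<^bsub>G\<^esub> i) = d g" if g: "g \<in> carrier G" and i: "i \<in> involutions G" for g i
  proof -
    have ic: "i \<in> carrier G" and ii: "inv\<^bsub>G\<^esub> i = i" using i unfolding involutions_def
      using G.inv_equality by auto
    have "f (g \<otimes>\<^bsub>G\<^esub> i) \<otimes>\<^bsub>H\<^esub> f (g \<otimes>\<^bsub>G\<^esub> inv\<^bsub>G\<^esub> i) = f g \<otimes>\<^bsub>H\<^esub> f g"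
      using assms(4) g ic by blast
    then show ?thesis using ii unfolding d_def by simp
  qed
  have C: "d (i \<otimes>\<^bsub>G\<^esub> g) = d g" if g: "g \<in> carrier G" and i: "i \<in> involutions G" for g i
  proof -
    have ic: "i \<in> carrier G" and ii: "inv\<^bsub>G\<^esub> i = i" using i unfolding involutions_def
      using G.inv_equality by auto
    have "d (i \<otimes>\<^bsub>G\<^esub> g) = inv\<^bsub>H\<^esub> d (inv\<^bsub>G\<^esub> (i \<otimes>\<^bsub>G\<^esub> g))"
      using dinv[of "i \<otimes>\<^bsub>G\<^esub> g"] dc g ic by simp
    also have "inv\<^bsub>G\<^esub> (i \<otimes>\<^bsub>G\<^esub> g) = inv\<^bsub>G\<^esub> g \<otimes>\<^bsub>G\<^esub> i"
      using G.inv_mult_group g ic ii by simp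
    also have "d (inv\<^bsub>G\<^esub> g \<otimes>\<^bsub>G\<^esub> i) = d (inv\<^bsub>G\<^esub> g)" using B g i by simp
    also have "inv\<^bsub>H\<^esub> d (inv\<^bsub>G\<^esub> g) = d g" using dinv g dc by simp
    finally show ?thesis .
  qed
  have d1: "d \<one>\<^bsub>G\<^esub> = \<one>\<^bsub>H\<^esub>" using assms(5) d_def by simp
  have invc: "involutions G \<subseteq> carrier G" unfolding involutions_def by auto
  have L: "set is \<subseteq> involutions G \<Longrightarrow> d (foldr (\<lambda>a b. a \<otimes>\<^bsub>G\<^esub> b) is \<one>\<^bsub>G\<^esub>) = \<one>\<^bsub>H\<^esub>
      \<and> foldr (\<lambda>a b. a \<otimes>\<^bsub>G\<^esub> b) is \<one>\<^bsub>G\<^esub> \<in> carrier G" for "is"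
  proof (induction "is")
    case Nil then show ?case using d1 by simp
  next
    case (Cons a t)
    then show ?case using C[of _ a] invc by auto
  qed
  have P1: "\<forall>g\<in>carrier G. prod_of_involutions G g \<longrightarrow> d g = \<one>\<^bsub>H\<^esub>"
    unfolding prod_of_involutions_def using L by blast
  have Gen: "h \<in> generate G (involutions G) \<Longrightarrow> \<forall>g\<in>carrier G. d (h \<otimes>\<^bsub>G\<^esub> g) = d g" for h
  proof (induction rule: generate.induct)
    case one then show ?case by simp
  next
    case (incl h) then show ?case using C by simp
  next
    case (inv h)
    have "inv\<^bsub>G\<^esub> h = h" using inv G.inv_equality unfolding involutions_def by auto
    then show ?case using C inv by simp
  next
    case (eng h1 h2)
    have "h1 \<in> carrier G" "h2 \<in> carrier G"
      using eng G.generate_in_carrier invc by auto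
    then show ?case using eng by (simp add: G.m_assoc)
  qed
  have P2: "generate G (involutions G) = carrier G \<longrightarrow> (\<forall>g\<in>carrier G. d g = \<one>\<^bsub>H\<^esub>)"
    using Gen d1 by (metis G.r_one G.one_closed)
  show ?thesis using P1 P2 unfolding d_def by simp
qed

end
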